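(* Let $B$ be an abelian group equipped with an infinite family of group homomorphisms $r_v\colon B\to B_v$ (indexed by primes $v$ of a number field $F$) into finite abelian groups $B_v$, satisfying Assumptions (A1) and (A2) described in the context. Let $P,Q\in B$ be points of infinite order. Then the following are equivalent: (i) for all but finitely many $v$ there exist coprime integers $x,y$ and a point $T\in B_{\mathrm{tors}}$ such that $r_v(x^2P+y^2Q)=r_v(T)$; (ii) there exist coprime integers $x,y$ and a point $T\in B_{\mathrm{tors}}$ such that $x^2P+y^2Q=T$.
   Context: Setting: $F$ is a number field, $B$ an abelian group, and $r_v\colon B\to B_v$ an infinite family of group homomorphisms indexed by primes $v$ of $F$, with each $B_v$ a finite abelian group. $B_{\mathrm{tors}}$ denotes the torsion subgroup of $B$. For $P\in B$, $\mathrm{ord}_v P$ denotes the order of $r_v(P)$ in $B_v$. For a prime $l$ and positive integer $k$, $l^k\parallel n$ means $l^k\mid n$ and $l^{k+1}\nmid n$. Assumption (A1): for every prime number $l$, every sequence $(k_1,\dots,k_m)$ of nonnegative integers, and every points $P_1,\dots,P_m\in B$ linearly independent over $\mathbb{Z}$, there is a set of primes $v$ of $F$ of positive density such that for each $i$, $l^{k_i}\parallel \mathrm{ord}_v P_i$ if $k_i>0$ and $l\nmid \mathrm{ord}_v P_i$ if $k_i=0$. Assumption (A2): for all but finitely many $v$ the restriction of $r_v$ to $B_{\mathrm{tors}}$ is injective. (Examples: $S$-unit groups of a number field, Mordell–Weil groups $A(F)$ of abelian varieties with $\mathrm{End}_{\bar F}(A)=\mathbb{Z}$, odd $K$-groups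 $K_{2n+1}(F)$, $n>0$, with reduction maps.) *)

theory Defs
  imports Complex_Main "HOL-Algebra.Multiplicative_Group" "HOL-Computational_Algebra.Primes"
begin

text \<open>Groups are HOL-Algebra structures written multiplicatively:
  the paper's x P is written P [^] x, and P + Q is P \<otimes> Q.\<close>

definition torsion :: "('a, 'm) monoid_scheme \<Rightarrow> 'a set" where
  "torsion G = {g \<in> carrier G. \<exists>n::nat. n > 0 \<and> g [^]\<^bsub>G\<^esub> n = \<one>\<^bsub>G\<^esub>}"

definition lin_indep_Z :: "('a, 'm) monoid_scheme \<Rightarrow> (nat \<Rightarrow> 'a) \<Rightarrow> nat \<Rightarrow> bool" where
  "lin_indep_Z G P m \<longleftrightarrow> (\<forall>i<m. P i \<in> carrier G) \<and>
     (\<forall>a::nat \<Rightarrow> int. finprod G (\<lambda>i. P i [^]\<^bsub>G\<^esub> a i) {..<m} = \<one>\<^bsub>G\<^esub>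
        \<longrightarrow> (\<forall>i<m. a i = 0))"

definition exact_pow_cond :: "nat \<Rightarrow> nat \<Rightarrow> nat \<Rightarrow> bool" where
  "exact_pow_cond l k n \<longleftrightarrow>
     (if k > 0 then l ^ k dvd n \<and> \<not> l ^ (k + 1) dvd n else \<not> l dvd n)"

text \<open>Natural density of a set S of primes (primes ordered by their absolute norm Nv),
  existing and positive.\<close>
definition has_pos_density :: "('v \<Rightarrow> nat) \<Rightarrow> 'v set \<Rightarrow> bool" where
  "has_pos_density Nv S \<longleftrightarrow> (\<exists>d::real. d > 0 \<and>
     ((\<lambda>x::nat. real (card {v \<in> S. Nv v \<le> x}) / real (card {v. Nv v \<le> x})) \<longlonglongrightarrow> d))"

definition assumption_A1 ::
  "('b, 'm) monoid_scheme \<Rightarrow> ('v \<Rightarrow> ('c, 'n) monoid_scheme) \<Rightarrow> ('v \<Rightarrow> 'b \<Rightarrow> 'c) \<Rightarrow> ('v \<Rightarrow> nat) \<Rightarrow> bool"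
  where
  "assumption_A1 B Bv r Nv \<longleftrightarrow>
     (\<forall>(l::nat) (m::nat) (k::nat \<Rightarrow> nat) (P::nat \<Rightarrow> 'b).
        prime l \<longrightarrow> lin_indep_Z B P m \<longrightarrow>
        (\<exists>S. has_pos_density Nv S \<and>
           (\<forall>v\<in>S. \<forall>i<m. exact_pow_cond l (k i) (group.ord (Bv v) (r v (P i))))))"

definition assumption_A2 ::
  "('b, 'm) monoid_scheme \<Rightarrow> ('v \<Rightarrow> 'b \<Rightarrow> 'c) \<Rightarrow> bool" where
  "assumption_A2 B r \<longleftrightarrow> finite {v. \<not> inj_on (r v) (torsion B)}"

end

theory Submission
  imports Defs "HOL-Computational_Algebra.Nth_Powers"
begin


lemma pow_cancel_aux:
  fixes l t :: int assumes "prime l" "t \<noteq> 0"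
  obtains e where "\<And>K z. l^(K+e) dvd t*z \<Longrightarrow> l^K dvd z"
proof -
  obtain y where ty: "t = l ^ multiplicity l t * y" "\<not> l dvd y"
    using multiplicity_decompose'[of t l] assms not_prime_unit by blast
  show ?thesis
  proof (rule that[of "multiplicity l t"])
    fix K z assume h: "l ^ (K + multiplicity l t) dvd t * z"
    have e1: "l ^ (K + multiplicity l t) = l ^ multiplicity l t * l^K"
      by (simp add: power_add mult.commute)
    have e2: "t * z = l ^ multiplicity l t * (y * z)" using ty(1) by (simp add: mult.assoc)
    have "l ^ multiplicity l t * l^K dvd l ^ multiplicity l t * (y * z)"
      using h unfolding e1 e2 .
    moreover have "l ^ multiplicity l t \<noteq> 0" using assms(1) by (simp add: prime_gt_0_int)
    ultimately have "l^K dvd y * z" using dvd_mult_cancel_left by blast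
    moreover have "coprime (l^K) y"
      using ty(2) assms(1) by (simp add: prime_imp_coprime)
    ultimately show "l^K dvd z" by (simp add: coprime_dvd_mult_right_iff)
  qed
qed

lemma even_mult_aux:
  fixes a b x y l :: int
  assumes l: "prime l" and a: "a \<noteq> 0" and ab: "coprime a b" and xy: "coprime x y"
    and d: "l^(multiplicity l a + 1) dvd (b*x^2 - a*y^2)"
  shows "even (multiplicity l a)"
proof (cases "multiplicity l a = 0")
  case True then show ?thesis by simp
next
  case False
  define \<alpha> where "\<alpha> = multiplicity l a"
  have nu: "\<not> is_unit l" using l not_prime_unit by blast
  have la: "l dvd a" using False multiplicity_gt_zero_iff[OF a nu] by simp
  have lb: "\<not> l dvd b"
    by (metis ab l la coprime_common_divisor not_prime_unit)
  have aa: "l^\<alpha> dvd a" unfolding \<alpha>_def by (rule multiplicity_dvd)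
  have na: "\<not> l^(\<alpha>+1) dvd a"
    using power_dvd_iff_le_multiplicity[OF a nu, of "\<alpha>+1"] \<alpha>_def by simp
  show ?thesis
  proof (cases "l dvd y")
    case True
    then have nx: "\<not> l dvd x" using xy l
      by (meson coprime_common_divisor not_prime_unit)
    have "l dvd b*x^2 - a*y^2" using d
      by (rule dvd_trans[rotated]) simp
    moreover have "l dvd a*y^2" using la by simp
    ultimately have "l dvd (b*x^2 - a*y^2) + a*y^2" by (rule dvd_add)
    then have "l dvd b*x^2" by simp
    then show ?thesis using l lb nx
      by (metis prime_dvd_mult_iff prime_dvd_power)
  next
    case ny: False
    show ?thesis
    proof (cases "l^(\<alpha>+1) dvd b*x^2")
      case True
      have d': "l^(\<alpha>+1) dvd b*x^2 - a*y^2" using d by (simp add: \<alpha>_def)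
      have "l^(\<alpha>+1) dvd b*x^2 - (b*x^2 - a*y^2)" using True d' by (rule dvd_diff)
      then have "l^(\<alpha>+1) dvd a*y^2" by simp
      moreover have "coprime (l^(\<alpha>+1)) (y^2)"
        using ny l by (simp add: prime_imp_coprime)
      ultimately have "l^(\<alpha>+1) dvd a" by (simp add: coprime_dvd_mult_left_iff)
      then show ?thesis using na by simp
    next
      case nb: False
      then have x0: "x \<noteq> 0" by auto
      have b0: "b \<noteq> 0" using lb by auto
      have "l^\<alpha> dvd a*y^2" using aa by simp
      moreover have "l^\<alpha> dvd b*x^2 - a*y^2" using d unfolding \<alpha>_def[symmetric]
        by (rule dvd_trans[rotated]) (simp add: le_imp_power_dvd)
      ultimately have "l^\<alpha> dvd (b*x^2 - a*y^2) + a*y^2" by (intro dvd_add)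
      then have "l^\<alpha> dvd b*x^2" by simp
      have bx0: "b*x^2 \<noteq> 0" using x0 b0 by simp
      hence le: "\<alpha> \<le> multiplicity l (b*x^2)" using \<open>l^\<alpha> dvd b*x^2\<close> power_dvd_iff_le_multiplicity[OF bx0 nu] by simp
      have mb: "multiplicity l b = 0" using lb multiplicity_eq_zero_iff[OF b0 nu] by simp
      have mbx: "multiplicity l (b*x^2) = 2 * multiplicity l x"
      proof -
        have pe: "prime_elem l" using l by (rule prime_imp_prime_elem)
        have "multiplicity l (b*x^2) = multiplicity l b + multiplicity l (x^2)"
          using x0 b0 by (intro prime_elem_multiplicity_mult_distrib[OF pe]) auto
        also have "multiplicity l (x^2) = 2 * multiplicity l x"
          using x0 by (intro prime_elem_multiplicity_power_distrib[OF pe])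
        finally show ?thesis using mb by simp
      qed
      have "\<not> \<alpha> + 1 \<le> multiplicity l (b*x^2)" using nb power_dvd_iff_le_multiplicity[OF bx0 nu, of "\<alpha>+1"] by blast
      then have "\<alpha> = 2 * multiplicity l x" using le mbx by simp
      then show ?thesis by (simp add: \<alpha>_def)
    qed
  qed
qed

lemma sq_aux:
  fixes A1 C :: int
  assumes "odd A1" "(2::int)^(2*j+2) dvd (2^j*A1)^2 + C^2"
  shows False
proof -
  have "(2::int)^(2*j) dvd (2^j*A1)^2" by (simp add: power_mult_distrib power_mult[symmetric] mult.commute)
  moreover have "(2::int)^(2*j) dvd (2^j*A1)^2 + C^2"
    using assms(2) by (rule dvd_trans[rotated]) (simp add: le_imp_power_dvd)
  ultimately have "(2::int)^(2*j) dvd C^2" using dvd_add_right_iff by blast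
  hence "(2^j)^2 dvd C^2" by (simp add: power_mult[symmetric] mult.commute)
  hence "(2::int)^j dvd C" using pow_divides_pow_iff[of 2] by simp
  then obtain C1 where C: "C = 2^j*C1" by blast
  have "(2::int)^(2*j) * 4 dvd 2^(2*j) * (A1^2 + C1^2)"
    using assms(2) C by (simp add: power_mult_distrib power_add algebra_simps power_mult[symmetric] mult.commute)
  hence "4 dvd A1^2 + C1^2" by simp
  moreover obtain m where "A1 = 2*m+1" using assms(1) oddE by blast
  ultimately have "4 dvd (2*m+1)^2 + C1^2" by simp
  then show False
  proof (cases "even C1")
    case True
    then obtain k where "C1 = 2*k" by blast
    then have "(2*m+1)^2 + C1^2 = 4*(m^2+m+k^2) + 1" by (simp add: power2_eq_square algebra_simps)
    with \<open>4 dvd (2*m+1)^2 + C1^2\<close> have "(4::int) dvd 4*(m^2+m+k^2) + 1" by simp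
    then have "(4::int) dvd 1" using dvd_add_right_iff[of 4 "4*(m^2+m+k^2)" 1] by simp
    then show False by simp
  next
    case False
    then obtain k where "C1 = 2*k+1" using oddE by blast
    then have "(2*m+1)^2 + C1^2 = 4*(m^2+m+k^2+k) + 2" by (simp add: power2_eq_square algebra_simps)
    with \<open>4 dvd (2*m+1)^2 + C1^2\<close> have "(4::int) dvd 4*(m^2+m+k^2+k) + 2" by simp
    then have "(4::int) dvd 2" using dvd_add_right_iff[of 4 "4*(m^2+m+k^2+k)" 2] by simp
    then show False by simp
  qed
qed

lemma odd_part_aux:
  fixes w :: int assumes "w \<noteq> 0"
  obtains w1 where "w = 2^multiplicity 2 w * w1" "odd w1"
  using multiplicity_decompose'[of w 2] assms by auto

lemma sign_aux:
  fixes u w x y :: int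
  assumes u: "u \<noteq> 0" and w: "w \<noteq> 0" and xy: "coprime x y"
    and d: "(2::int)^(2*(multiplicity 2 u + multiplicity 2 w)+2) dvd w^2*x^2 + u^2*y^2"
  shows False
proof -
  define K where "K = 2*(multiplicity 2 u + multiplicity 2 w)+2"
  have "odd x \<or> odd y" using xy by (metis coprime_common_divisor dvd_mult_left even_numeral
      odd_one dvd_trans dvdI mult.commute)
  then show False
  proof
    assume ox: "odd x"
    obtain w1 where w1: "w = 2^multiplicity 2 w * w1" "odd w1" using odd_part_aux[OF w] by blast
    have "(2::int)^(2*multiplicity 2 w+2) dvd 2^K" unfolding K_def by (rule le_imp_power_dvd) simp
    moreover have "(2::int)^K dvd (2^multiplicity 2 w * (w1*x))^2 + (u*y)^2"
      using d unfolding K_def by (subst (asm) w1(1)) (simp add: power_mult_distrib mult.assoc)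
    ultimately have "(2::int)^(2*multiplicity 2 w+2) dvd (2^multiplicity 2 w * (w1*x))^2 + (u*y)^2"
      by (rule dvd_trans)
    moreover have "odd (w1*x)" using ox w1(2) by simp
    ultimately show False using sq_aux by blast
  next
    assume oy: "odd y"
    obtain u1 where u1: "u = 2^multiplicity 2 u * u1" "odd u1" using odd_part_aux[OF u] by blast
    have "(2::int)^(2*multiplicity 2 u+2) dvd 2^K" unfolding K_def by (rule le_imp_power_dvd) simp
    moreover have "(2::int)^K dvd (2^multiplicity 2 u * (u1*y))^2 + (w*x)^2"
      using d unfolding K_def by (subst (asm) u1(1)) (simp add: power_mult_distrib mult.assoc add.commute)
    ultimately have "(2::int)^(2*multiplicity 2 u+2) dvd (2^multiplicity 2 u * (u1*y))^2 + (w*x)^2"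
      by (rule dvd_trans)
    moreover have "odd (u1*y)" using oy u1(2) by simp
    ultimately show False using sq_aux by blast
  qed
qed

lemma square_aux:
  fixes a :: int
  assumes "a \<noteq> 0" "\<And>l. prime l \<Longrightarrow> even (multiplicity l a)"
  obtains u where "\<bar>a\<bar> = u^2" "u \<noteq> 0"
proof -
  have "is_nth_power 2 (normalize a)"
    using is_nth_power_conv_multiplicity[of 2 a] assms(2) by simp
  then obtain u where "\<bar>a\<bar> = u^2" by (auto elim: is_nth_powerE)
  moreover then have "u \<noteq> 0" using assms(1) by auto
  ultimately show ?thesis using that by blast
qed



lemma nt_main:
  fixes a b :: int
  assumes a0: "a \<noteq> 0" and b0: "b \<noteq> 0"
    and H: "\<And>(l::nat) K. prime l \<Longrightarrow> \<exists>x y::int. coprime x y \<and> (int l)^K dvd (b*x^2 - a*y^2)"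
  shows "\<exists>u w c. coprime u w \<and> c \<noteq> 0 \<and> a = c*u^2 \<and> b = c*w^2"
proof -
  define g where "g = gcd a b"
  define a' where "a' = a div g"
  define b' where "b' = b div g"
  have g0: "g \<noteq> 0" using a0 unfolding g_def by simp
  have aa: "a = g*a'" unfolding a'_def g_def by simp
  have bb: "b = g*b'" unfolding b'_def g_def by simp
  have cop: "coprime a' b'" unfolding a'_def b'_def g_def using a0 by (simp add: div_gcd_coprime)
  have a'0: "a' \<noteq> 0" using aa a0 by auto
  have b'0: "b' \<noteq> 0" using bb b0 by auto
  have H': "\<exists>x y. coprime x y \<and> l^K dvd (b'*x^2 - a'*y^2)" if l: "prime l" for l :: int and K
  proof -
    obtain e where e: "\<And>K z. l^(K+e) dvd g*z \<Longrightarrow> l^K dvd z" using pow_cancel_aux[OF l g0] by blast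
    have li: "int (nat l) = l" using prime_ge_0_int[OF l] by simp
    have ln: "prime (nat l)" using l prime_nat_int_transfer[of "nat l"] li by simp
    obtain x y where xy: "coprime x y" "(int (nat l))^(K+e) dvd (b*x^2 - a*y^2)" using H[OF ln] by blast
    have "b*x^2 - a*y^2 = g*(b'*x^2 - a'*y^2)" unfolding aa bb by (simp add: algebra_simps)
    then have "l^(K+e) dvd g*(b'*x^2 - a'*y^2)" using xy(2) li by simp
    then show ?thesis using e xy(1) by blast
  qed
  have ev_a: "even (multiplicity l a')" if l: "prime l" for l
  proof -
    obtain x y where "coprime x y" "l^(multiplicity l a' + 1) dvd (b'*x^2 - a'*y^2)" using H'[OF l] by blast
    then show ?thesis using even_mult_aux[OF l a'0 cop] by blast
  qed
  have ev_b: "even (multiplicity l b')" if l: "prime l" for l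
  proof -
    obtain x y where xy: "coprime x y" "l^(multiplicity l b' + 1) dvd (b'*x^2 - a'*y^2)" using H'[OF l] by blast
    have "l^(multiplicity l b' + 1) dvd (a'*y^2 - b'*x^2)"
      using xy(2) by (metis dvd_minus_iff minus_diff_eq)
    moreover have "coprime y x" using xy(1) by (simp add: coprime_commute)
    moreover have "coprime b' a'" using cop by (simp add: coprime_commute)
    ultimately show ?thesis using even_mult_aux[OF l b'0] by blast
  qed
  obtain u where u: "\<bar>a'\<bar> = u^2" "u \<noteq> 0" using square_aux[OF a'0 ev_a] by blast
  obtain w where w: "\<bar>b'\<bar> = w^2" "w \<noteq> 0" using square_aux[OF b'0 ev_b] by blast
  have "coprime \<bar>a'\<bar> \<bar>b'\<bar>" using cop by simp
  then have "coprime (u^2) (w^2)" by (simp only: u(1) w(1))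
  then have cuw: "coprime u w" using coprime_power_left_iff[of u 2 "w^2"] coprime_power_right_iff[of u w 2] by auto
  have ea0: "a' = sgn a' * u^2" using sgn_mult_abs[of a'] u(1) by simp
  have eb0: "b' = sgn b' * w^2" using sgn_mult_abs[of b'] w(1) by simp
  show ?thesis
  proof (cases "sgn a' = sgn b'")
    case True
    have "g*a' = g*(sgn a' * u^2)" using ea0 by (rule arg_cong)
    then have "a = (g*sgn a')*u^2" using aa by (simp add: mult.assoc)
    moreover have "g*b' = g*(sgn a' * w^2)" using eb0 True by simp
    then have "b = (g*sgn a')*w^2" using bb by (simp add: mult.assoc)
    moreover have "g*sgn a' \<noteq> 0" using g0 a'0 by (simp add: sgn_0_0)
    ultimately show ?thesis using cuw by blast
  next
    case False
    obtain s where s: "s = sgn b'" by blast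
    have sg: "sgn a' = - s" using False a'0 b'0 s by (auto simp: sgn_if split: if_splits)
    have ss: "s*s = 1" using s b'0 by (auto simp: sgn_if)
    have ea: "a' = - s * u^2" using ea0 sg by simp
    have eb: "b' = s * w^2" using eb0 s by simp
    obtain x y where xy: "coprime x y"
      "2^(2*(multiplicity 2 u + multiplicity 2 w)+2) dvd (b'*x^2 - a'*y^2)"
      using H'[of 2] by fastforce
    have e: "b'*x^2 - a'*y^2 = s * (w^2*x^2 + u^2*y^2)"
      unfolding ea eb by (simp add: algebra_simps)
    have "w^2*x^2 + u^2*y^2 = s * (s * (w^2*x^2 + u^2*y^2))" using ss by (simp add: mult.assoc[symmetric])
    then have "2^(2*(multiplicity 2 u + multiplicity 2 w)+2) dvd (w^2*x^2 + u^2*y^2)"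
      using xy(2) unfolding e by (metis dvd_mult)
    then show ?thesis using sign_aux[OF u(2) w(2) xy(1)] by blast
  qed
qed



lemma two_pow_cancel:
  fixes z :: int assumes "2^(k+1) dvd 2^k * z" shows "even z"
proof -
  have "2^k * 2 dvd 2^k * z" using assms by (simp add: mult.commute)
  then show ?thesis by (subst (asm) dvd_mult_cancel_left) simp
qed

lemma exact_pow_decomp:
  assumes "exact_pow_cond 2 k n" "k > 0"
  obtains n' where "n = 2^k * n'" "odd n'"
proof -
  from assms have d: "2^k dvd n" "\<not> 2^(k+1) dvd n" by (auto simp: exact_pow_cond_def)
  then obtain n' where n: "n = 2^k * n'" by blast
  have "odd n'"
  proof
    assume "even n'" then obtain n'' where "n' = 2*n''" by blast
    then have "n = 2^(k+1) * n''" using n by simp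
    then show False using d(2) by simp
  qed
  then show ?thesis using that n by blast
qed

lemma local_indep:
  fixes G (structure) and t t' x y :: int
  assumes G: "comm_group G" and p: "p \<in> carrier G" and q: "q \<in> carrier G"
    and t: "t = 2^e * t'" "odd t'"
    and ep: "exact_pow_cond 2 (e+2) (group.ord G p)"
    and eq: "exact_pow_cond 2 (e+1) (group.ord G q)"
    and xy: "coprime x y"
    and rel: "p [^] (t*x^2) \<otimes> q [^] (t*y^2) = \<one>"
  shows False
proof -
  interpret comm_group G by (rule G)
  obtain n' where n: "ord p = 2^(e+2) * n'" "odd n'" using exact_pow_decomp[OF ep] by auto
  obtain m' where m: "ord q = 2^(e+1) * m'" "odd m'" using exact_pow_decomp[OF eq] by auto
  have pw: "p [^] (t*x^2*E) \<otimes> q [^] (t*y^2*E) = \<one>" for E :: int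
  proof -
    have "(p [^] (t*x^2) \<otimes> q [^] (t*y^2)) [^] E = \<one>" using rel by simp
    then show ?thesis using p q by (simp add: int_pow_mult_distrib m_comm int_pow_pow)
  qed
  show False
  proof (cases "odd x")
    case True
    define E where "E = 2 * int m'"
    have "int (ord q) dvd t*y^2*E"
      unfolding E_def t(1) m(1) by (simp add: dvd_def algebra_simps)
    then have "q [^] (t*y^2*E) = \<one>" using int_pow_eq_id[OF q] by blast
    then have "p [^] (t*x^2*E) = \<one>" using pw[of E] p by simp
    then have "int (ord p) dvd t*x^2*E" using int_pow_eq_id[OF p] by blast
    moreover have "(2::int)^(e+1+1) dvd int (ord p)" using n(1) by simp
    moreover have "t*x^2*E = 2^(e+1) * (t'*x^2*(int m'))" unfolding E_def t(1) by (simp add: algebra_simps)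
    ultimately have "2^(e+1+1) dvd 2^(e+1) * (t'*x^2*(int m'))" by (metis dvd_trans)
    then have "even (t'*x^2*(int m'))" by (rule two_pow_cancel)
    then show False using True t(2) m(2) by simp
  next
    case False
    then have oy: "odd y" using xy by (metis coprime_common_divisor even_numeral odd_one)
    from False obtain x' where x': "x = 2*x'" by blast
    define E where "E = int n'"
    have "int (ord p) dvd t*x^2*E"
      unfolding E_def t(1) n(1) x' by (simp add: dvd_def algebra_simps)
    then have "p [^] (t*x^2*E) = \<one>" using int_pow_eq_id[OF p] by blast
    then have "q [^] (t*y^2*E) = \<one>" using pw[of E] q by simp
    then have "int (ord q) dvd t*y^2*E" using int_pow_eq_id[OF q] by blast
    moreover have "(2::int)^(e+1) dvd int (ord q)" using m(1) by simp
    moreover have "t*y^2*E = 2^e * (t'*y^2*(int n'))" unfolding E_def t(1) by (simp add: algebra_simps)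
    ultimately have "2^(e+1) dvd 2^e * (t'*y^2*(int n'))" by (metis dvd_trans)
    then have "even (t'*y^2*(int n'))" by (rule two_pow_cancel)
    then show False using oy t(2) n(2) by simp
  qed
qed

lemma local_dep:
  fixes G (structure) and a b t x y :: int
  assumes G: "comm_group G" and p: "p \<in> carrier G" and q: "q \<in> carrier G"
    and dep: "p [^] a \<otimes> q [^] b = \<one>"
    and rel: "p [^] (t*x^2) \<otimes> q [^] (t*y^2) = \<one>"
  shows "int (group.ord G p) dvd t*(b*x^2 - a*y^2)"
proof -
  interpret comm_group G by (rule G)
  have "q [^] b \<otimes> p [^] a = \<one>" using dep p q by (simp add: m_comm)
  then have qb: "q [^] b = p [^] (-a)" using p q by (simp add: int_pow_neg inv_equality)
  have "(p [^] (t*x^2) \<otimes> q [^] (t*y^2)) [^] b = \<one>" using rel by simp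
  then have "p [^] (t*x^2*b) \<otimes> (q [^] b) [^] (t*y^2) = \<one>"
    using p q by (simp add: int_pow_mult_distrib m_comm int_pow_pow mult.commute)
  then have "p [^] (t*x^2*b) \<otimes> p [^] (-a*(t*y^2)) = \<one>" using qb p by (simp add: int_pow_pow)
  then have "p [^] (t*x^2*b + -a*(t*y^2)) = \<one>" using p int_pow_mult[OF p, of "t*x^2*b" "-a*(t*y^2)"] by simp
  moreover have "t*x^2*b + -a*(t*y^2) = t*(b*x^2 - a*y^2)" by (simp add: algebra_simps)
  ultimately show ?thesis using int_pow_eq_id[OF p] by simp
qed



lemma dens_inf:
  fixes Nv :: "'v \<Rightarrow> nat"
  assumes inf: "infinite (UNIV::'v set)" and fin: "\<And>x. finite {v. Nv v \<le> x}"
    and dens: "has_pos_density Nv S"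
  shows "infinite S"
proof
  assume fS: "finite S"
  from dens obtain d :: real where d: "d > 0"
    "(\<lambda>x::nat. real (card {v \<in> S. Nv v \<le> x}) / real (card {v. Nv v \<le> x})) \<longlonglongrightarrow> d"
    unfolding has_pos_density_def by blast
  have ev1: "eventually (\<lambda>x. real (card {v \<in> S. Nv v \<le> x}) / real (card {v. Nv v \<le> x}) > d/2) sequentially"
    using order_tendstoD(1)[OF d(2), of "d/2"] d(1) by simp
  define M where "M = nat (ceiling (2 * real (card S) / d)) + 1"
  have M: "real M > 2 * real (card S) / d" unfolding M_def by linarith
  obtain F where F: "F \<subseteq> (UNIV::'v set)" "finite F" "card F = M"
    using infinite_arbitrarily_large[OF inf] by blast
  define x0 where "x0 = (\<Sum>v\<in>F. Nv v)"
  have sub: "F \<subseteq> {v. Nv v \<le> x}" if "x \<ge> x0" for x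
  proof
    fix v assume "v \<in> F"
    then have "Nv v \<le> x0" unfolding x0_def using F(2) by (intro member_le_sum) auto
    then show "v \<in> {v. Nv v \<le> x}" using that by simp
  qed
  have ev2: "eventually (\<lambda>x. x \<ge> x0) sequentially" by (rule eventually_ge_at_top)
  obtain x where x: "real (card {v \<in> S. Nv v \<le> x}) / real (card {v. Nv v \<le> x}) > d/2" "x \<ge> x0"
    using eventually_happens'[OF _ eventually_conj[OF ev1 ev2]] by auto
  have cM: "card {v. Nv v \<le> x} \<ge> M" using card_mono[OF fin sub[OF x(2)]] F(3) by simp
  have Mpos: "M > 0" unfolding M_def by simp
  have cpos: "real (card {v. Nv v \<le> x}) > 0" using cM Mpos by simp
  have A: "card {v \<in> S. Nv v \<le> x} \<le> card S" using fS by (intro card_mono) auto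
  have "real (card {v \<in> S. Nv v \<le> x}) > d/2 * real (card {v. Nv v \<le> x})"
    using x(1) cpos by (simp add: field_simps)
  moreover have "d/2 * real (card {v. Nv v \<le> x}) \<ge> d/2 * real M" using cM d(1) by simp
  moreover have "d/2 * real M > real (card S)" using M d(1) by (simp add: field_simps)
  ultimately show False using A by linarith
qed

lemma torsion_of_pow:
  fixes B (structure) and k :: int
  assumes "group B" "g \<in> carrier B" "g [^] k = \<one>" "k \<noteq> 0"
  shows "g \<in> torsion B"
proof -
  interpret group B by (rule assms(1))
  have pw: "g [^] (nat \<bar>k\<bar>) = \<one>"
  proof (cases "k > 0")
    case True
    then have "g [^] (nat \<bar>k\<bar>) = g [^] k" using int_pow_int[where x=g and n="nat k"] by simp
    then show ?thesis using assms by simp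
  next
    case False
    then have "g [^] (nat \<bar>k\<bar>) = g [^] (-k)" using int_pow_int[where x=g and n="nat (-k)"] by simp
    also have "\<dots> = inv (g [^] k)" using assms(2) by (rule int_pow_neg)
    finally show ?thesis using assms by simp
  qed
  have n0: "nat \<bar>k\<bar> > 0" using assms(4) by simp
  show ?thesis unfolding torsion_def using assms(2) n0 pw by blast
qed

lemma tors_exp:
  fixes B :: "('b, 'm) monoid_scheme" and Bv :: "'v \<Rightarrow> ('c, 'n) monoid_scheme"
  assumes B: "group B" and Bv: "\<And>v. group (Bv v)" and fin: "\<And>v. finite (carrier (Bv v))"
    and hom: "\<And>v. r v \<in> hom B (Bv v)" and inf: "infinite (UNIV :: 'v set)"
    and A2: "assumption_A2 B r"
  obtains N :: nat where "N > 0" "\<And>T. T \<in> torsion B \<Longrightarrow> T [^]\<^bsub>B\<^esub> N = \<one>\<^bsub>B\<^esub>"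
proof -
  obtain v0 where v0: "inj_on (r v0) (torsion B)"
    using A2 inf unfolding assumption_A2_def by (metis (mono_tags, lifting) ex_new_if_finite mem_Collect_eq)
  interpret B: group B by (rule B)
  interpret H: group "Bv v0" by (rule Bv)
  interpret h: group_hom B "Bv v0" "r v0" using hom B Bv by (simp add: group_hom_def group_hom_axioms_def)
  define N where "N = order (Bv v0)"
  have N0: "N > 0" unfolding N_def using fin[of v0] by (simp add: H.order_gt_0_iff_finite)
  have "T [^]\<^bsub>B\<^esub> N = \<one>\<^bsub>B\<^esub>" if T: "T \<in> torsion B" for T
  proof -
    from T obtain n :: nat where n: "T \<in> carrier B" "n > 0" "T [^]\<^bsub>B\<^esub> n = \<one>\<^bsub>B\<^esub>"
      unfolding torsion_def by auto
    have "(T [^]\<^bsub>B\<^esub> N) [^]\<^bsub>B\<^esub> n = \<one>\<^bsub>B\<^esub>"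
    proof -
      have "(T [^]\<^bsub>B\<^esub> N) [^]\<^bsub>B\<^esub> n = T [^]\<^bsub>B\<^esub> (N*n)" using B.nat_pow_pow[OF n(1)] by blast
      also have "\<dots> = (T [^]\<^bsub>B\<^esub> n) [^]\<^bsub>B\<^esub> N" using B.nat_pow_pow[OF n(1), of n N] by (simp add: mult.commute)
      also have "\<dots> = \<one>\<^bsub>B\<^esub>" using n(3) by simp
      finally show ?thesis .
    qed
    then have tN: "T [^]\<^bsub>B\<^esub> N \<in> torsion B" unfolding torsion_def using n by auto
    have one: "\<one>\<^bsub>B\<^esub> \<in> torsion B" unfolding torsion_def by (auto intro: exI[of _ 1])
    have "r v0 (T [^]\<^bsub>B\<^esub> N) = r v0 T [^]\<^bsub>Bv v0\<^esub> N" using n(1) by (rule h.hom_nat_pow)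
    also have "\<dots> = \<one>\<^bsub>Bv v0\<^esub>" unfolding N_def using n(1) by (intro H.pow_order_eq_1) simp
    also have "\<dots> = r v0 \<one>\<^bsub>B\<^esub>" by simp
    finally show ?thesis using v0 tN one by (meson inj_onD)
  qed
  then show ?thesis using that N0 by blast
qed

lemma loc:
  fixes B (structure) and H (structure) and x y :: int
  assumes B: "comm_group B" and H: "comm_group H" and h: "h \<in> hom B H"
    and P: "P \<in> carrier B" and Q: "Q \<in> carrier B" and T: "T \<in> carrier B"
    and TN: "T [^]\<^bsub>B\<^esub> (N::nat) = \<one>\<^bsub>B\<^esub>"
    and e: "h (P [^]\<^bsub>B\<^esub> (x^2) \<otimes>\<^bsub>B\<^esub> Q [^]\<^bsub>B\<^esub> (y^2)) = h T"
  shows "h P [^]\<^bsub>H\<^esub> (int N * x^2) \<otimes>\<^bsub>H\<^esub> h Q [^]\<^bsub>H\<^esub> (int N * y^2) = \<one>\<^bsub>H\<^esub>"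
proof -
  interpret B: comm_group B by (rule B)
  interpret H: comm_group H by (rule H)
  interpret g: group_hom B H h using h by (simp add: group_hom_def group_hom_axioms_def B.is_group H.is_group)
  have hP: "h P \<in> carrier H" and hQ: "h Q \<in> carrier H" using P Q by auto
  have "h (P [^]\<^bsub>B\<^esub> (x^2) \<otimes>\<^bsub>B\<^esub> Q [^]\<^bsub>B\<^esub> (y^2)) = h P [^]\<^bsub>H\<^esub> (x^2) \<otimes>\<^bsub>H\<^esub> h Q [^]\<^bsub>H\<^esub> (y^2)"
    using P Q by (simp add: g.hom_int_pow)
  then have e2: "h P [^]\<^bsub>H\<^esub> (x^2) \<otimes>\<^bsub>H\<^esub> h Q [^]\<^bsub>H\<^esub> (y^2) = h T" using e by simp
  have "h T [^]\<^bsub>H\<^esub> N = \<one>\<^bsub>H\<^esub>" using g.hom_nat_pow[OF T, of N] TN by simp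
  then have "(h P [^]\<^bsub>H\<^esub> (x^2) \<otimes>\<^bsub>H\<^esub> h Q [^]\<^bsub>H\<^esub> (y^2)) [^]\<^bsub>H\<^esub> (int N) = \<one>\<^bsub>H\<^esub>"
    using e2 by (simp add: int_pow_int)
  then show ?thesis using hP hQ by (simp add: H.int_pow_mult_distrib H.m_comm H.int_pow_pow mult.commute)
qed



theorem theorem2p1:
  fixes B :: "('b, 'm) monoid_scheme"
    and Bv :: "'v \<Rightarrow> ('c, 'n) monoid_scheme"
    and r :: "'v \<Rightarrow> 'b \<Rightarrow> 'c"
    and Nv :: "'v \<Rightarrow> nat"
    and P Q :: 'b
  assumes B_grp: "comm_group B"
    and Bv_grp: "\<And>v. comm_group (Bv v)"
    and Bv_fin: "\<And>v. finite (carrier (Bv v))"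
    and r_hom: "\<And>v. r v \<in> hom B (Bv v)"
    and primes_inf: "infinite (UNIV :: 'v set)"
    and norm_fin: "\<And>x. finite {v. Nv v \<le> x}"
    and A1: "assumption_A1 B Bv r Nv"
    and A2: "assumption_A2 B r"
    and P: "P \<in> carrier B" "P \<notin> torsion B"
    and Q: "Q \<in> carrier B" "Q \<notin> torsion B"
  shows "finite {v. \<not> (\<exists>x y :: int. coprime x y \<and> (\<exists>T \<in> torsion B.
              r v (P [^]\<^bsub>B\<^esub> (x ^ 2) \<otimes>\<^bsub>B\<^esub> Q [^]\<^bsub>B\<^esub> (y ^ 2)) = r v T))}
     \<longleftrightarrow> (\<exists>x y :: int. coprime x y \<and> (\<exists>T \<in> torsion B.
              P [^]\<^bsub>B\<^esub> (x ^ 2) \<otimes>\<^bsub>B\<^esub> Q [^]\<^bsub>B\<^esub> (y ^ 2) = T))"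
  (is "finite ?Bad \<longleftrightarrow> ?G")
proof
  assume ?G
  then have "?Bad = {}" by blast
  then show "finite ?Bad" by simp
next
  assume fin: "finite ?Bad"
  interpret B: comm_group B by (rule B_grp)
  have grpBv: "group (Bv v)" for v using Bv_grp[of v] by (simp add: comm_group.axioms(2))
  obtain N :: nat where N0: "N > 0" and TN: "\<And>T. T \<in> torsion B \<Longrightarrow> T [^]\<^bsub>B\<^esub> N = \<one>\<^bsub>B\<^esub>"
    using tors_exp[OF B.is_group grpBv Bv_fin r_hom primes_inf A2] by blast
  have good: "\<exists>v\<in>S. v \<notin> ?Bad" if "has_pos_density Nv S" for S
  proof -
    have "infinite S" using dens_inf[OF primes_inf norm_fin that] .
    then show ?thesis using fin by (meson finite_subset subsetI)
  qed
  have local: "\<exists>x y :: int. coprime x y \<and>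
      r v P [^]\<^bsub>Bv v\<^esub> (int N * x^2) \<otimes>\<^bsub>Bv v\<^esub> r v Q [^]\<^bsub>Bv v\<^esub> (int N * y^2) = \<one>\<^bsub>Bv v\<^esub>"
    if "v \<notin> ?Bad" for v
  proof -
    from that obtain x y :: int and T where xy: "coprime x y" "T \<in> torsion B"
      "r v (P [^]\<^bsub>B\<^esub> (x ^ 2) \<otimes>\<^bsub>B\<^esub> Q [^]\<^bsub>B\<^esub> (y ^ 2)) = r v T" by blast
    have T: "T \<in> carrier B" using xy(2) unfolding torsion_def by simp
    show ?thesis using loc[OF B_grp Bv_grp r_hom P(1) Q(1) T TN[OF xy(2)] xy(3)] xy(1) by blast
  qed
  have rP: "r v P \<in> carrier (Bv v)" and rQ: "r v Q \<in> carrier (Bv v)" for v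
    using r_hom P(1) Q(1) by (auto simp: hom_def)
  have A1': "\<And>(l::nat) m k PP. prime l \<Longrightarrow> lin_indep_Z B PP m \<Longrightarrow> \<exists>S. has_pos_density Nv S \<and>
           (\<forall>v\<in>S. \<forall>i<m. exact_pow_cond l (k i) (group.ord (Bv v) (r v (PP i))))"
    using A1 unfolding assumption_A1_def by blast
  define PQ where "PQ = (\<lambda>i::nat. if i = 0 then P else Q)"
  have fp2: "finprod B (\<lambda>i. PQ i [^]\<^bsub>B\<^esub> a i) {..<2} = P [^]\<^bsub>B\<^esub> a 0 \<otimes>\<^bsub>B\<^esub> Q [^]\<^bsub>B\<^esub> a 1"
    for a :: "nat \<Rightarrow> int"
  proof -
    have e: "{..<2::nat} = insert 0 (insert 1 {})" by auto
    show ?thesis unfolding e using P(1) Q(1)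
      by (simp add: Pi_def PQ_def)
  qed
  show ?G
  proof (cases "lin_indep_Z B PQ 2")
    case True
    have N0': "int N \<noteq> 0" using N0 by simp
    obtain t' where t': "int N = 2^multiplicity 2 (int N) * t'" "odd t'" using odd_part_aux[OF N0'] by blast
    define e where "e = multiplicity 2 (int N)"
    obtain S where S: "has_pos_density Nv S"
      "\<forall>v\<in>S. \<forall>i<2. exact_pow_cond 2 ((\<lambda>i. if i = 0 then e+2 else e+1) i) (group.ord (Bv v) (r v (PQ i)))"
      using A1'[OF two_is_prime_nat True, of "\<lambda>i. if i = 0 then e+2 else e+1"] by blast
    obtain v where v: "v \<in> S" "v \<notin> ?Bad" using good[OF S(1)] by blast
    have ep: "exact_pow_cond 2 (e+2) (group.ord (Bv v) (r v P))" using S(2) v(1) by (force simp: PQ_def)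
    have h: "\<forall>i<(2::nat). exact_pow_cond 2 ((\<lambda>i. if i = 0 then e+2 else e+1) i) (group.ord (Bv v) (r v (PQ i)))"
      using S(2) v(1) by blast
    have eq: "exact_pow_cond 2 (e+1) (group.ord (Bv v) (r v Q))" using h[rule_format, of 1] by (simp add: PQ_def)
    obtain x y :: int where xy: "coprime x y"
      "r v P [^]\<^bsub>Bv v\<^esub> (int N * x^2) \<otimes>\<^bsub>Bv v\<^esub> r v Q [^]\<^bsub>Bv v\<^esub> (int N * y^2) = \<one>\<^bsub>Bv v\<^esub>"
      using local[OF v(2)] by blast
    have False using local_indep[OF Bv_grp rP rQ t'(1)[folded e_def] t'(2) ep eq xy(1) xy(2)] .
    then show ?thesis ..
  next
    case False
    then obtain a :: "nat \<Rightarrow> int" where a: "finprod B (\<lambda>i. PQ i [^]\<^bsub>B\<^esub> a i) {..<2} = \<one>\<^bsub>B\<^esub>"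
      "\<exists>i<2. a i \<noteq> 0"
    proof -
      have cPQ: "\<forall>i<2. PQ i \<in> carrier B" using P(1) Q(1) by (simp add: PQ_def)
      have "\<not> (\<forall>a::nat\<Rightarrow>int. finprod B (\<lambda>i. PQ i [^]\<^bsub>B\<^esub> a i) {..<2} = \<one>\<^bsub>B\<^esub> \<longrightarrow> (\<forall>i<2. a i = 0))"
        using False cPQ unfolding lin_indep_Z_def by blast
      then show ?thesis using that by blast
    qed
    have dep: "P [^]\<^bsub>B\<^esub> a 0 \<otimes>\<^bsub>B\<^esub> Q [^]\<^bsub>B\<^esub> a 1 = \<one>\<^bsub>B\<^esub>" using a(1) fp2 by simp
    have a0: "a 0 \<noteq> 0"
    proof
      assume "a 0 = 0"
      then have "Q [^]\<^bsub>B\<^esub> a 1 = \<one>\<^bsub>B\<^esub>" using dep Q(1) by simp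
      moreover have "a 1 \<noteq> 0"
      proof -
        obtain i where i: "i < 2" "a i \<noteq> 0" using a(2) by blast
        have "i \<noteq> 0"
        proof
          assume "i = 0"
          then show False using i(2) \<open>a 0 = 0\<close> by simp
        qed
        then have "i = 1" using i(1) by arith
        then show ?thesis using i(2) by simp
      qed
      ultimately show False using torsion_of_pow[OF B.is_group Q(1)] Q(2) by blast
    qed
    have a1: "a 1 \<noteq> 0"
    proof
      assume "a 1 = 0"
      then have "P [^]\<^bsub>B\<^esub> a 0 = \<one>\<^bsub>B\<^esub>" using dep P(1) by simp
      then show False using torsion_of_pow[OF B.is_group P(1)] P(2) a0 by blast
    qed
    have indP: "lin_indep_Z B (\<lambda>i. P) 1"
      unfolding lin_indep_Z_def
    proof (intro conjI allI impI)
      fix c :: "nat \<Rightarrow> int" and i :: nat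
      assume c: "finprod B (\<lambda>i. P [^]\<^bsub>B\<^esub> c i) {..<1} = \<one>\<^bsub>B\<^esub>" and i: "i < 1"
      have e: "{..<1::nat} = insert 0 {}" by auto
      have "P [^]\<^bsub>B\<^esub> c 0 = \<one>\<^bsub>B\<^esub>" using c P(1) unfolding e by (simp add: Pi_def)
      then have "c 0 = 0" using torsion_of_pow[OF B.is_group P(1)] P(2) by blast
      then show "c i = 0" using i by simp
    qed (use P(1) in auto)
    have H: "\<exists>x y::int. coprime x y \<and> (int l)^K dvd (a 1*x^2 - a 0*y^2)" if l: "prime l" for l :: nat and K
    proof -
      have li: "prime (int l)" using l by simp
      have N0': "int N \<noteq> 0" using N0 by simp
      obtain e where e: "\<And>K z. (int l)^(K+e) dvd int N*z \<Longrightarrow> (int l)^K dvd z"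
        using pow_cancel_aux[OF li N0'] by blast
      obtain S where S: "has_pos_density Nv S"
        "\<forall>v\<in>S. \<forall>i<(1::nat). exact_pow_cond l ((\<lambda>i. K+e+1) i) (group.ord (Bv v) (r v ((\<lambda>i. P) i)))"
        using A1'[OF l indP, of "\<lambda>i. K+e+1"] by blast
      obtain v where v: "v \<in> S" "v \<notin> ?Bad" using good[OF S(1)] by blast
      have "exact_pow_cond l (K+e+1) (group.ord (Bv v) (r v P))" using S(2) v(1) by auto
      then have "l^(K+e+1) dvd group.ord (Bv v) (r v P)" unfolding exact_pow_cond_def by simp
      then have d1: "(int l)^(K+e+1) dvd int (group.ord (Bv v) (r v P))"
        by (metis of_nat_dvd_iff of_nat_power)
      obtain x y :: int where xy: "coprime x y"
        "r v P [^]\<^bsub>Bv v\<^esub> (int N * x^2) \<otimes>\<^bsub>Bv v\<^esub> r v Q [^]\<^bsub>Bv v\<^esub> (int N * y^2) = \<one>\<^bsub>Bv v\<^esub>"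
        using local[OF v(2)] by blast
      interpret hv: group_hom B "Bv v" "r v"
        using r_hom grpBv B.is_group by (simp add: group_hom_def group_hom_axioms_def)
      have "r v (P [^]\<^bsub>B\<^esub> a 0 \<otimes>\<^bsub>B\<^esub> Q [^]\<^bsub>B\<^esub> a 1) = \<one>\<^bsub>Bv v\<^esub>" using dep by simp
      then have dv: "r v P [^]\<^bsub>Bv v\<^esub> a 0 \<otimes>\<^bsub>Bv v\<^esub> r v Q [^]\<^bsub>Bv v\<^esub> a 1 = \<one>\<^bsub>Bv v\<^esub>"
        using P(1) Q(1) by (simp add: hv.hom_int_pow)
      have "int (group.ord (Bv v) (r v P)) dvd int N * (a 1 * x^2 - a 0 * y^2)"
        by (rule local_dep[OF Bv_grp rP rQ dv xy(2)])
      moreover have "(int l)^(K+e) dvd (int l)^(K+e+1)" by (rule le_imp_power_dvd) simp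
      ultimately have "(int l)^(K+e) dvd int N * (a 1 * x^2 - a 0 * y^2)" using d1 by (meson dvd_trans)
      then show ?thesis using e xy(1) by blast
    qed
    obtain u w c where uwc: "coprime u w" "c \<noteq> 0" "a 0 = c*u^2" "a 1 = c*w^2"
      using nt_main[OF a0 a1 H] by blast
    define T where "T = P [^]\<^bsub>B\<^esub> (u^2) \<otimes>\<^bsub>B\<^esub> Q [^]\<^bsub>B\<^esub> (w^2)"
    have Tc: "T \<in> carrier B" unfolding T_def using P(1) Q(1) by simp
    have "T [^]\<^bsub>B\<^esub> c = P [^]\<^bsub>B\<^esub> (u^2*c) \<otimes>\<^bsub>B\<^esub> Q [^]\<^bsub>B\<^esub> (w^2*c)"
      unfolding T_def using P(1) Q(1) by (simp add: B.int_pow_mult_distrib B.m_comm B.int_pow_pow)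
    also have "\<dots> = \<one>\<^bsub>B\<^esub>" using dep uwc(3,4) by (simp add: mult.commute)
    finally have "T \<in> torsion B" using torsion_of_pow[OF B.is_group Tc _ uwc(2)] by blast
    then show ?thesis using uwc(1) unfolding T_def by blast
  qed
qed

end
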